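(* Let $m,d\in\mathbb N$. Let $H$ be a bipartite graph with vertex classes $X$ and $Y$ such that any two sets $X'\subseteq X$, $Y'\subseteq Y$ with $|X'|=|Y'|=m$ have an edge between them. Suppose $X_0\subseteq X$ and $Y_0\subseteq Y$ satisfy $|X_0|,|Y_0|\ge (3d+4)m$. Then there is a set $B\subseteq V(H)$ with $|B|\le 2m$ such that every $U\subseteq V(H)\setminus B$ with $|U|\le m$ satisfies $|N(U,(X_0\cup Y_0)\setminus B)|\ge d|U|$.
   Context: For $U\subseteq V(H)$, $N(U)=\big(\bigcup_{u\in U}N(u)\big)\setminus U$ is the exterior neighbourhood, and $N(U,W)=N(U)\cap W$. *)

theory Defs
  imports Main
begin

definition bipartite_graph :: "'a set \<Rightarrow> 'a set \<Rightarrow> ('a \<Rightarrow> 'a \<Rightarrow> bool) \<Rightarrow> bool" where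
  "bipartite_graph X Y E \<longleftrightarrow>
     finite X \<and> finite Y \<and> X \<inter> Y = {} \<and>
     (\<forall>u v. E u v \<longrightarrow> E v u) \<and>
     (\<forall>u v. E u v \<longrightarrow> (u \<in> X \<and> v \<in> Y) \<or> (u \<in> Y \<and> v \<in> X))"

definition nbhd :: "'a set \<Rightarrow> ('a \<Rightarrow> 'a \<Rightarrow> bool) \<Rightarrow> 'a \<Rightarrow> 'a set" where
  "nbhd V E u = {v \<in> V. E u v}"

definition ext_nbhd :: "'a set \<Rightarrow> ('a \<Rightarrow> 'a \<Rightarrow> bool) \<Rightarrow> 'a set \<Rightarrow> 'a set" where
  "ext_nbhd V E U = (\<Union>u\<in>U. nbhd V E u) - U"

definition nbhd_in :: "'a set \<Rightarrow> ('a \<Rightarrow> 'a \<Rightarrow> bool) \<Rightarrow> 'a set \<Rightarrow> 'a set \<Rightarrow> 'a set" where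
  "nbhd_in V E U W = ext_nbhd V E U \<inter> W"

end

theory Submission
  imports Defs
begin

lemma key:
  fixes E :: "'a \<Rightarrow> 'a \<Rightarrow> bool" and V S T W Z :: "'a set" and m d :: nat
  assumes m: "m \<ge> 1" and finT: "finite T" and fW: "finite W" and fZ: "finite Z" and fS: "finite S"
    and dense: "\<forall>S' T'. S' \<subseteq> S \<and> T' \<subseteq> T \<and> card S' = m \<and> card T' = m \<longrightarrow> (\<exists>s\<in>S'. \<exists>t\<in>T'. E s t)"
    and SW: "S \<subseteq> W" and cS: "card S \<ge> m"
    and TV: "T \<subseteq> V" and TZ: "T \<subseteq> Z" and cT: "card T \<ge> (3*d+4)*m" and cW: "card W \<le> 3*m"
  shows "card (nbhd_in V E W (Z - W)) > d * card W"
proof -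
  define R where "R = {t\<in>T. \<forall>s\<in>S. \<not> E s t}"
  have RT: "R \<subseteq> T" by (auto simp: R_def)
  have cR: "card R < m"
  proof (rule ccontr)
    assume "\<not> card R < m"
    then have "m \<le> card R" by simp
    then obtain R' where R': "R' \<subseteq> R" "card R' = m" by (rule obtain_subset_with_card_n)
    obtain S' where S': "S' \<subseteq> S" "card S' = m" using cS by (rule obtain_subset_with_card_n)
    have "R' \<subseteq> T" using R' RT by auto
    then have "\<exists>s\<in>S'. \<exists>t\<in>R'. E s t" using dense S' R' by simp
    then obtain s t where "s \<in> S'" "t \<in> R'" "E s t" by blast
    then show False using R' S' by (auto simp: R_def)
  qed
  have sub: "(T - R) - W \<subseteq> nbhd_in V E W (Z - W)"
    using SW TV TZ by (auto simp: nbhd_in_def ext_nbhd_def nbhd_def R_def)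
  have fin: "finite (nbhd_in V E W (Z - W))"
    by (rule finite_subset[of _ Z]) (auto simp: nbhd_in_def fZ)
  have c1: "card (T - R) \<ge> card T - card R"
    using diff_card_le_card_Diff[of R T] finite_subset[OF RT finT] by simp
  have c2: "card ((T - R) - W) \<ge> card (T - R) - card W"
    using diff_card_le_card_Diff[of W "T - R"] fW by simp
  have c3: "card ((T - R) - W) \<le> card (nbhd_in V E W (Z - W))"
    using card_mono[OF fin sub] .
  have "d * card W \<le> d * (3*m)" using cW by simp
  then have h1: "d * card W \<le> 3 * (d * m)" by (simp add: algebra_simps)
  have h2: "(3*d+4)*m = 3 * (d * m) + 4*m" by (simp add: algebra_simps)
  show ?thesis using c1 c2 c3 cR cT cW h1 h2 by linarith
qed

theorem proposition3p36:
  fixes X Y X0 Y0 :: "'a set" and E :: "'a \<Rightarrow> 'a \<Rightarrow> bool" and m d :: nat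
  assumes H: "bipartite_graph X Y E"
    and dense: "\<forall>X' Y'. X' \<subseteq> X \<and> Y' \<subseteq> Y \<and> card X' = m \<and> card Y' = m \<longrightarrow>
                  (\<exists>x\<in>X'. \<exists>y\<in>Y'. E x y)"
    and X0: "X0 \<subseteq> X" and Y0: "Y0 \<subseteq> Y"
    and cX0: "card X0 \<ge> (3 * d + 4) * m" and cY0: "card Y0 \<ge> (3 * d + 4) * m"
  shows "\<exists>B. B \<subseteq> X \<union> Y \<and> card B \<le> 2 * m \<and>
           (\<forall>U. U \<subseteq> (X \<union> Y) - B \<and> card U \<le> m \<longrightarrow>
              card (nbhd_in (X \<union> Y) E U ((X0 \<union> Y0) - B)) \<ge> d * card U)"
proof -
  have fX: "finite X" and fY: "finite Y" and disj: "X \<inter> Y = {}"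
    and sym: "\<And>u v. E u v \<Longrightarrow> E v u" using H by (auto simp: bipartite_graph_def)
  have m1: "m \<ge> 1"
  proof (rule ccontr)
    assume "\<not> m \<ge> 1"
    then have "m = 0" by simp
    then show False using dense[rule_format, of "{}" "{}"] by simp
  qed
  define V where "V = X \<union> Y"
  define Z where "Z = X0 \<union> Y0"
  have fV: "finite V" using fX fY V_def by simp
  have fZ: "finite Z" using Z_def X0 Y0 fX fY finite_subset by auto
  have fX0: "finite X0" using X0 fX finite_subset by auto
  have fY0: "finite Y0" using Y0 fY finite_subset by auto
  define P where "P W \<longleftrightarrow> W \<subseteq> V \<and> card W \<le> 3*m \<and> card (nbhd_in V E W (Z - W)) \<le> d * card W" for W
  have bound: "card W \<le> 2*m - 2" if PW: "P W" for W
  proof -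
    have WV: "W \<subseteq> V" and cW: "card W \<le> 3*m"
      and cN: "card (nbhd_in V E W (Z - W)) \<le> d * card W" using PW by (auto simp: P_def)
    have fW: "finite W" using WV fV finite_subset by auto
    have a: "card (W \<inter> X) < m"
    proof (rule ccontr)
      assume "\<not> card (W \<inter> X) < m"
      then have "card (W \<inter> X) \<ge> m" by simp
      have "card (nbhd_in V E W (Z - W)) > d * card W"
      proof (rule key[of m Y0 W Z "W \<inter> X" E V d])
        show "\<forall>S' T'. S' \<subseteq> W \<inter> X \<and> T' \<subseteq> Y0 \<and> card S' = m \<and> card T' = m \<longrightarrow> (\<exists>s\<in>S'. \<exists>t\<in>T'. E s t)"
        proof (intro allI impI)
          fix S' T' assume h: "S' \<subseteq> W \<inter> X \<and> T' \<subseteq> Y0 \<and> card S' = m \<and> card T' = m"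
          then have "S' \<subseteq> X" "T' \<subseteq> Y" using Y0 by auto
          then show "\<exists>s\<in>S'. \<exists>t\<in>T'. E s t" using dense h by blast
        qed
      qed (use m1 fY0 fW fZ Y0 cY0 cW \<open>card (W \<inter> X) \<ge> m\<close> in \<open>auto simp: V_def Z_def\<close>)
      then show False using cN by simp
    qed
    have b: "card (W \<inter> Y) < m"
    proof (rule ccontr)
      assume "\<not> card (W \<inter> Y) < m"
      then have cy: "card (W \<inter> Y) \<ge> m" by simp
      have dd: "\<forall>S' T'. S' \<subseteq> W \<inter> Y \<and> T' \<subseteq> X0 \<and> card S' = m \<and> card T' = m \<longrightarrow> (\<exists>s\<in>S'. \<exists>t\<in>T'. E s t)"
      proof (intro allI impI)
        fix S' T' assume h: "S' \<subseteq> W \<inter> Y \<and> T' \<subseteq> X0 \<and> card S' = m \<and> card T' = m"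
        then have "T' \<subseteq> X" "S' \<subseteq> Y" using X0 by auto
        then obtain x y where "x \<in> T'" "y \<in> S'" "E x y" using dense h by blast
        then show "\<exists>s\<in>S'. \<exists>t\<in>T'. E s t" using sym by blast
      qed
      have "card (nbhd_in V E W (Z - W)) > d * card W"
        by (rule key[of m X0 W Z "W \<inter> Y" E V d]) (use cy dd m1 fX0 fW fZ X0 cX0 cW in \<open>auto simp: V_def Z_def\<close>)
      then show False using cN by simp
    qed
    have "W = (W \<inter> X) \<union> (W \<inter> Y)" using WV V_def by auto
    then have "card W \<le> card (W \<inter> X) + card (W \<inter> Y)" by (metis card_Un_le)
    then show ?thesis using a b by linarith
  qed
  define F where "F = {W. P W}"
  have fF: "finite F" by (rule finite_subset[of _ "Pow V"]) (auto simp: F_def P_def fV)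
  have eF: "{} \<in> F" by (simp add: F_def P_def nbhd_in_def ext_nbhd_def)
  define k where "k = Max (card ` F)"
  have "k \<in> card ` F" unfolding k_def using fF eF by (intro Max_in) auto
  then obtain B where BF: "B \<in> F" and kB: "card B = k" by auto
  have maxB: "card W \<le> card B" if "W \<in> F" for W
    using kB k_def fF that by simp
  have PB: "P B" using BF F_def by simp
  have BV: "B \<subseteq> V" using PB P_def by simp
  have fB: "finite B" using BV fV finite_subset by auto
  have cB: "card B \<le> 2*m - 2" using bound PB by simp
  have NB: "card (nbhd_in V E B (Z - B)) \<le> d * card B" using PB P_def by simp
  have good: "card (nbhd_in V E U (Z - B)) \<ge> d * card U" if U: "U \<subseteq> V - B" "card U \<le> m" for U
  proof (rule ccontr)
    assume "\<not> card (nbhd_in V E U (Z - B)) \<ge> d * card U"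
    then have lt: "card (nbhd_in V E U (Z - B)) < d * card U" by simp
    have fU: "finite U" using U fV finite_subset by auto
    have "U \<noteq> {}" using lt by (auto simp: nbhd_in_def ext_nbhd_def)
    then have cU: "card U > 0" using fU by auto
    define W where "W = B \<union> U"
    have cW: "card W = card B + card U" unfolding W_def using U fB fU by (subst card_Un_disjoint) auto
    have sub: "nbhd_in V E W (Z - W) \<subseteq> nbhd_in V E B (Z - B) \<union> nbhd_in V E U (Z - B)"
      unfolding W_def nbhd_in_def ext_nbhd_def nbhd_def by auto
    have f1: "finite (nbhd_in V E B (Z - B))" and f2: "finite (nbhd_in V E U (Z - B))"
      by (auto intro: finite_subset[of _ Z] simp: nbhd_in_def fZ)
    have "card (nbhd_in V E W (Z - W)) \<le> card (nbhd_in V E B (Z - B) \<union> nbhd_in V E U (Z - B))"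
      using card_mono[OF _ sub] f1 f2 by simp
    also have "\<dots> \<le> card (nbhd_in V E B (Z - B)) + card (nbhd_in V E U (Z - B))" by (rule card_Un_le)
    also have "\<dots> \<le> d * card W" using NB lt cW by (simp add: algebra_simps)
    finally have "card (nbhd_in V E W (Z - W)) \<le> d * card W" .
    moreover have "W \<subseteq> V" using W_def BV U by auto
    moreover have "card W \<le> 3 * m" using cW cB U by linarith
    ultimately have "W \<in> F" by (simp add: F_def P_def)
    then have "card W \<le> card B" by (rule maxB)
    then show False using cW cU by simp
  qed
  have g1: "B \<subseteq> X \<union> Y" using BV V_def by simp
  have g2: "card B \<le> 2 * m" using cB by simp
  have g3: "\<forall>U. U \<subseteq> (X \<union> Y) - B \<and> card U \<le> m \<longrightarrow>
              card (nbhd_in (X \<union> Y) E U ((X0 \<union> Y0) - B)) \<ge> d * card U"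
  proof (intro allI impI)
    fix U assume "U \<subseteq> (X \<union> Y) - B \<and> card U \<le> m"
    then have "U \<subseteq> V - B" "card U \<le> m" using V_def by auto
    from good[OF this] show "card (nbhd_in (X \<union> Y) E U ((X0 \<union> Y0) - B)) \<ge> d * card U"
      unfolding V_def Z_def .
  qed
  show ?thesis by (rule exI[of _ B]) (intro conjI g1 g2 g3)
qed

end
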